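(* Let $n>1$ be an integer and let $p>q$ be primes neither of which divides $n$. Then $G(pn)<G(qn)$.
   Context: For a positive integer $n$, $\sigma(n)=\sum_{d\mid n} d$. For integers $n>1$ define $G(n)=\dfrac{\sigma(n)}{n\log\log n}$ (natural logarithms). *)

theory Defs
  imports Complex_Main "HOL-Computational_Algebra.Primes"
begin

definition divisor_sigma :: "nat \<Rightarrow> nat" where
  "divisor_sigma n = (\<Sum>d\<in>{d. d dvd n}. d)"

definition G :: "nat \<Rightarrow> real" where
  "G n = real (divisor_sigma n) / (real n * ln (ln (real n)))"

end

theory Submission
  imports Defs
begin

lemma divset_eq:
  assumes "prime (p::nat)" "\<not> p dvd n"
  shows "{d. d dvd p*n} = {d. d dvd n} \<union> (\<lambda>e. p*e) ` {d. d dvd n}"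
proof (intro set_eqI iffI)
  fix d assume "d \<in> {d. d dvd p*n}"
  hence d: "d dvd p*n" by simp
  show "d \<in> {d. d dvd n} \<union> (\<lambda>e. p*e) ` {d. d dvd n}"
  proof (cases "p dvd d")
    case True
    then obtain e where e: "d = p*e" by blast
    with d assms(1) have "e dvd n" by (simp add: prime_gt_0_nat)
    with e show ?thesis by blast
  next
    case False
    hence "coprime d p" using assms(1)
      by (metis coprime_commute prime_imp_coprime)
    with d have "d dvd n" using coprime_dvd_mult_right_iff by blast
    thus ?thesis by simp
  qed
qed auto

lemma sigma_mult_prime:
  assumes "prime (p::nat)" "\<not> p dvd n" "n > 0"
  shows "divisor_sigma (p*n) = (p+1) * divisor_sigma n"
proof -
  have fin: "finite {d. d dvd n}" using assms(3) by simp
  have disj: "{d. d dvd n} \<inter> (\<lambda>e. p*e) ` {d. d dvd n} = {}"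
    using assms(2) by (auto intro: dvd_mult_left)
  have inj: "inj_on (\<lambda>e. p*e) {d. d dvd n}" using assms(1)
    by (auto simp: inj_on_def prime_gt_0_nat)
  have "divisor_sigma (p*n) = (\<Sum>d\<in>{d. d dvd n}. d) + (\<Sum>d\<in>(\<lambda>e. p*e) ` {d. d dvd n}. d)"
    unfolding divisor_sigma_def divset_eq[OF assms(1,2)]
    by (rule sum.union_disjoint) (use fin disj in auto)
  also have "(\<Sum>d\<in>(\<lambda>e. p*e) ` {d. d dvd n}. d) = p * (\<Sum>d\<in>{d. d dvd n}. d)"
    by (simp add: sum.reindex[OF inj] sum_distrib_left)
  finally show ?thesis unfolding divisor_sigma_def by simp
qed

lemma G_mult_prime:
  assumes "prime (p::nat)" "\<not> p dvd n" "n > 0"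
  shows "G (p*n) = (real p + 1) / real p * (real (divisor_sigma n) / real n) / ln (ln (real p * real n))"
  unfolding G_def sigma_mult_prime[OF assms]
  using prime_gt_0_nat[OF assms(1)] assms(3) by (simp add: field_simps)

theorem mainTheorem10:
  fixes n p q :: nat
  assumes "n > 1" and "prime p" and "prime q" and "p > q"
    and "\<not> p dvd n" and "\<not> q dvd n"
  shows "G (p * n) < G (q * n)"
proof -
  have q2: "q \<ge> 2" using assms(3) prime_ge_2_nat by blast
  have n2: "real n \<ge> 2" using assms(1) by simp
  have qr: "real q \<ge> 2" using q2 by simp
  have pq: "real p > real q" using assms(4) by simp
  have sig: "divisor_sigma n \<ge> 1"
  proof -
    have "1 \<in> {d. d dvd n}" by simp
    moreover have "finite {d. d dvd n}" using assms(1) by simp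
    ultimately show ?thesis unfolding divisor_sigma_def
      by (metis member_le_sum zero_le)
  qed
  define S where "S = real (divisor_sigma n) / real n"
  have S: "S > 0" unfolding S_def using sig n2 by simp
  have "real q * real n \<ge> 4" using mult_mono[OF qr n2] by simp
  hence "ln (real q * real n) \<ge> ln 4" by simp
  moreover have "ln (4::real) > 1"
    using exp_gt_zero ln_ge_iff
    by (smt (verit, ccfv_SIG) exp_le ln_less_cancel_iff ln_exp)
  ultimately have l1: "ln (real q * real n) > 1" by simp
  hence Lq: "ln (ln (real q * real n)) > 0" by simp
  have "real p * real n > real q * real n" using pq n2 by simp
  hence "ln (real p * real n) > ln (real q * real n)" using l1
    by (smt (verit) ln_less_cancel_iff mult_pos_pos qr n2)
  hence Lpq: "ln (ln (real p * real n)) > ln (ln (real q * real n))" using l1 by simp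
  have frac: "(real p + 1) / real p < (real q + 1) / real q"
    using pq qr by (simp add: field_simps)
  have "(real p + 1) / real p * S / ln (ln (real p * real n))
        < (real q + 1) / real q * S / ln (ln (real p * real n))"
    using frac S Lq Lpq by (intro divide_strict_right_mono mult_strict_right_mono) auto
  also have "\<dots> \<le> (real q + 1) / real q * S / ln (ln (real q * real n))"
    using Lq Lpq S qr by (intro divide_left_mono) (auto intro: mult_pos_pos)
  finally show ?thesis
    using G_mult_prime[OF assms(2,5)] G_mult_prime[OF assms(3,6)] assms(1) S_def by simp
qed

end
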